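(* Let $n\ge1$, $p$ a prime dividing $n$, and $\prec$ a degree-compatible term order on the monomials of $\mathbb{C}[x_1,\ldots,x_n]$. Then for every $0\le t\le p-1$, $$\{x^u\in D:\ \deg(x^u)<\tfrac{n(p-1)}{p}\}\subseteq\mathrm{Sm}(\prec,B_t).$$
   Context: A term order is degree-compatible if $\deg u<\deg v$ implies $u\prec v$. $\omega_1=e^{2\pi i/p}$, $\omega_j=\omega_1^j$; $B=\{1,\omega_1,\ldots,\omega_{p-1}\}^n$, $B_t=\{(t_1,\ldots,t_n)\in B: t_1\cdots t_n=\omega_t\}$. $D=\{x_1^{u_1}\cdots x_n^{u_n}: 0\le u_i\le p-1\}$. $\mathrm{Sm}(\prec,X)$ is the set of monomials that are not the $\prec$-leading monomial of any nonzero polynomial vanishing on $X$. *)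

theory Defs
  imports Complex_Main "HOL-Computational_Algebra.Primes"
begin

text \<open>Monomials in x_1..x_n are exponent vectors u :: nat => nat (variable x_(i+1)
  corresponds to index i < n) vanishing at indices >= n.\<close>

definition monoms :: "nat \<Rightarrow> (nat \<Rightarrow> nat) set" where
  "monoms n = {u. \<forall>i\<ge>n. u i = 0}"

definition mdeg :: "nat \<Rightarrow> (nat \<Rightarrow> nat) \<Rightarrow> nat" where
  "mdeg n u = (\<Sum>i<n. u i)"

definition term_order :: "nat \<Rightarrow> ((nat \<Rightarrow> nat) \<Rightarrow> (nat \<Rightarrow> nat) \<Rightarrow> bool) \<Rightarrow> bool" where
  "term_order n ord \<longleftrightarrow>
     (\<forall>u\<in>monoms n. \<not> ord u u) \<and>
     (\<forall>u\<in>monoms n. \<forall>v\<in>monoms n. \<forall>w\<in>monoms n. ord u v \<longrightarrow> ord v w \<longrightarrow> ord u w) \<and>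
     (\<forall>u\<in>monoms n. \<forall>v\<in>monoms n. u = v \<or> ord u v \<or> ord v u) \<and>
     (\<forall>u\<in>monoms n. \<forall>v\<in>monoms n. \<forall>w\<in>monoms n. ord u v \<longrightarrow> ord (\<lambda>i. u i + w i) (\<lambda>i. v i + w i)) \<and>
     (\<forall>u\<in>monoms n. u \<noteq> (\<lambda>i. 0) \<longrightarrow> ord (\<lambda>i. 0) u)"

definition degree_compatible :: "nat \<Rightarrow> ((nat \<Rightarrow> nat) \<Rightarrow> (nat \<Rightarrow> nat) \<Rightarrow> bool) \<Rightarrow> bool" where
  "degree_compatible n ord \<longleftrightarrow>
     (\<forall>u\<in>monoms n. \<forall>v\<in>monoms n. mdeg n u < mdeg n v \<longrightarrow> ord u v)"

definition is_poly :: "nat \<Rightarrow> ((nat \<Rightarrow> nat) \<Rightarrow> complex) \<Rightarrow> bool" where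
  "is_poly n f \<longleftrightarrow> finite {u. f u \<noteq> 0} \<and> {u. f u \<noteq> 0} \<subseteq> monoms n"

definition peval :: "nat \<Rightarrow> ((nat \<Rightarrow> nat) \<Rightarrow> complex) \<Rightarrow> (nat \<Rightarrow> complex) \<Rightarrow> complex" where
  "peval n f x = (\<Sum>u\<in>{u. f u \<noteq> 0}. f u * (\<Prod>i<n. x i ^ u i))"

definition is_leading_mono ::
  "((nat \<Rightarrow> nat) \<Rightarrow> (nat \<Rightarrow> nat) \<Rightarrow> bool) \<Rightarrow> ((nat \<Rightarrow> nat) \<Rightarrow> complex) \<Rightarrow> (nat \<Rightarrow> nat) \<Rightarrow> bool" where
  "is_leading_mono ord f u \<longleftrightarrow> f u \<noteq> 0 \<and> (\<forall>v. f v \<noteq> 0 \<longrightarrow> v = u \<or> ord v u)"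

definition Sm :: "nat \<Rightarrow> ((nat \<Rightarrow> nat) \<Rightarrow> (nat \<Rightarrow> nat) \<Rightarrow> bool) \<Rightarrow> (nat \<Rightarrow> complex) set
                   \<Rightarrow> (nat \<Rightarrow> nat) set" where
  "Sm n ord X = {u \<in> monoms n. \<not> (\<exists>f. is_poly n f \<and> (\<exists>v. f v \<noteq> 0) \<and>
                    (\<forall>x\<in>X. peval n f x = 0) \<and> is_leading_mono ord f u)}"

definition omega :: "nat \<Rightarrow> nat \<Rightarrow> complex" where
  "omega p j = cis (2 * pi / real p) ^ j"

text \<open>Points of C^n represented as x :: nat => complex, coordinates i < n, zero elsewhere.\<close>

definition Bset :: "nat \<Rightarrow> nat \<Rightarrow> (nat \<Rightarrow> complex) set" where
  "Bset n p = {x. (\<forall>i<n. \<exists>j<p. x i = omega p j) \<and> (\<forall>i\<ge>n. x i = 0)}"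

definition Bt :: "nat \<Rightarrow> nat \<Rightarrow> nat \<Rightarrow> (nat \<Rightarrow> complex) set" where
  "Bt n p t = {x \<in> Bset n p. (\<Prod>i<n. x i) = omega p t}"

definition Dset :: "nat \<Rightarrow> nat \<Rightarrow> (nat \<Rightarrow> nat) set" where
  "Dset n p = {u \<in> monoms n. \<forall>i<n. u i \<le> p - 1}"

end

theory Submission
  imports Defs "HOL-Library.FuncSet"
begin

definition zz :: "nat \<Rightarrow> complex" where "zz p = cis (2 * pi / real p)"

lemma omega_zz: "omega p j = zz p ^ j" by (simp add: omega_def zz_def)

lemma zz_nz: "zz p \<noteq> 0"
  by (simp add: zz_def)

lemma zz_pow_p: "p > 0 \<Longrightarrow> zz p ^ p = 1"
  by (simp add: zz_def DeMoivre)

lemma zz_pow_mod: assumes p: "p > 0" shows "zz p ^ N = zz p ^ (N mod p)"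
proof -
  have "zz p ^ N = zz p ^ (p * (N div p) + N mod p)" by simp
  also have "\<dots> = zz p ^ (p * (N div p)) * zz p ^ (N mod p)" by (rule power_add)
  also have "\<dots> = (zz p ^ p) ^ (N div p) * zz p ^ (N mod p)" by (simp add: power_mult)
  finally show ?thesis using zz_pow_p[OF p] by simp
qed

lemma zz_pow_eq_1: assumes "p > 0" "zz p ^ N = 1" shows "p dvd N"
proof -
  let ?f = "\<lambda>k. cis (2 * pi * real k / real p)"
  have inj: "inj_on ?f {..<p}" using bij_betw_roots_unity[OF assms(1)] by (simp add: bij_betw_def)
  have "?f (N mod p) = zz p ^ (N mod p)" by (simp add: zz_def DeMoivre mult.commute)
  hence "?f (N mod p) = ?f 0" using zz_pow_mod[OF assms(1), of N] assms(2) by simp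
  from inj_onD[OF inj this] have "N mod p = 0" using assms(1) by simp
  thus ?thesis by auto
qed

definition mv :: "nat \<Rightarrow> (nat \<Rightarrow> nat) \<Rightarrow> (nat \<Rightarrow> complex) \<Rightarrow> complex" where
  "mv n e x = (\<Prod>i<n. x i ^ e i)"

lemma mv_mult: "mv n a x * mv n b x = mv n (\<lambda>k. a k + b k) x"
  by (simp add: mv_def prod.distrib[symmetric] power_add)

lemma Bset_finite: "finite (Bset n p)"
proof -
  let ?h = "\<lambda>g i. if i < n then zz p ^ g i else 0"
  have "Bset n p \<subseteq> ?h ` (PiE {..<n} (\<lambda>_. {..<p}))"
  proof
    fix x assume x: "x \<in> Bset n p"
    define g where "g = restrict (\<lambda>i. SOME j. j < p \<and> x i = omega p j) {..<n}"
    have gi: "g i < p \<and> x i = omega p (g i)" if "i < n" for i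
    proof -
      have "\<exists>j. j < p \<and> x i = omega p j" using x that by (auto simp: Bset_def)
      hence "(SOME j. j < p \<and> x i = omega p j) < p \<and> x i = omega p (SOME j. j < p \<and> x i = omega p j)"
        by (rule someI_ex)
      thus ?thesis using that by (simp add: g_def)
    qed
    have "g \<in> PiE {..<n} (\<lambda>_. {..<p})" unfolding g_def restrict_PiE_iff
      using gi g_def by auto
    moreover have "x = ?h g" using gi x by (auto simp: Bset_def omega_zz)
    ultimately show "x \<in> ?h ` (PiE {..<n} (\<lambda>_. {..<p}))" by blast
  qed
  moreover have "finite (PiE {..<n} (\<lambda>_. {..<p::nat}))" by (rule finite_PiE) auto
  ultimately show ?thesis using finite_subset by blast
qed

lemma Bt_finite: "finite (Bt n p t)"
  using Bset_finite[of n p] unfolding Bt_def by (rule finite_subset[rotated]) auto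

lemma Bt_nonempty: assumes "n \<ge> 1" "t < p" shows "Bt n p t \<noteq> {}"
proof -
  define x0 :: "nat \<Rightarrow> complex" where "x0 = (\<lambda>i. if i = 0 then omega p t else if i < n then 1 else 0)"
  have "x0 \<in> Bset n p"
    unfolding Bset_def
  proof (intro CollectI conjI allI impI)
    fix i assume "i < n"
    show "\<exists>j<p. x0 i = omega p j"
    proof (cases "i = 0")
      case True thus ?thesis using assms by (auto simp: x0_def)
    next
      case False thus ?thesis using assms \<open>i < n\<close> by (auto simp: x0_def omega_def intro!: exI[of _ 0])
    qed
  qed (use assms in \<open>auto simp: x0_def\<close>)
  moreover have "(\<Prod>i<n. x0 i) = omega p t"
  proof -
    have "(\<Prod>i<n. x0 i) = x0 0 * (\<Prod>i\<in>{..<n}-{0}. x0 i)"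
      using assms by (subst prod.remove[of _ 0]) auto
    also have "(\<Prod>i\<in>{..<n}-{0}. x0 i) = 1" by (rule prod.neutral) (auto simp: x0_def)
    finally show ?thesis by (simp add: x0_def)
  qed
  ultimately show ?thesis unfolding Bt_def by blast
qed

lemma sum_two_delta:
  fixes A B i j n :: nat
  assumes "i < n" "j < n" "i \<noteq> j"
  shows "(\<Sum>k<n. (if k = i then A else if k = j then B else 0)) = A + B"
proof -
  have "(\<Sum>k<n. (if k = i then A else if k = j then B else 0)) =
        (\<Sum>k<n. (if k = i then A else 0) + (if k = j then B else 0))"
    using assms by (intro sum.cong) auto
  also have "\<dots> = (\<Sum>k<n. (if k = i then A else 0)) + (\<Sum>k<n. (if k = j then B else 0))"
    by (rule sum.distrib)
  also have "\<dots> = A + B"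
    using assms by (simp only: sum.delta finite_lessThan) simp
  finally show ?thesis .
qed

lemma char_sum_zero:
  assumes p: "p > 0" and ij: "i < n" "j < n" "i \<noteq> j" and ne: "e i mod p \<noteq> e j mod p"
  shows "(\<Sum>x\<in>Bt n p t. mv n e x) = 0"
proof -
  let ?B = "Bt n p t"
  define a where "a k = (if k = i then 1 else if k = j then p - 1 else (0::nat))" for k
  define \<phi> where "\<phi> x = (\<lambda>k. x k * zz p ^ a k)" for x :: "nat \<Rightarrow> complex"
  have suma: "(\<Sum>k<n. a k) = p" unfolding a_def using sum_two_delta[OF ij] p by simp
  have prodc: "(\<Prod>k<n. zz p ^ a k) = 1"
    using suma zz_pow_p[OF p] by (simp add: power_sum[symmetric])
  have maps: "\<phi> ` ?B \<subseteq> ?B"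
  proof
    fix y assume "y \<in> \<phi> ` ?B"
    then obtain x where x: "x \<in> ?B" and y: "y = \<phi> x" by auto
    have "y \<in> Bset n p" unfolding Bset_def
    proof (intro CollectI conjI allI impI)
      fix k assume k: "k < n"
      then obtain m where "m < p" "x k = omega p m" using x by (auto simp: Bt_def Bset_def)
      hence "y k = zz p ^ (m + a k)" by (simp add: y \<phi>_def omega_zz power_add)
      also have "\<dots> = omega p ((m + a k) mod p)" using zz_pow_mod[OF p] by (simp add: omega_zz)
      finally show "\<exists>j<p. y k = omega p j" using p mod_less_divisor by blast
    next
      fix k assume "n \<le> k" thus "y k = 0" using x by (simp add: y \<phi>_def Bt_def Bset_def)
    qed
    moreover have "(\<Prod>k<n. y k) = omega p t"
    proof -
      have "(\<Prod>k<n. y k) = (\<Prod>k<n. x k) * (\<Prod>k<n. zz p ^ a k)"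
        by (simp add: y \<phi>_def prod.distrib)
      thus ?thesis using prodc x by (simp add: Bt_def)
    qed
    ultimately show "y \<in> ?B" by (simp add: Bt_def)
  qed
  have inj: "inj_on \<phi> ?B"
  proof
    fix x y assume "\<phi> x = \<phi> y"
    have "x k = y k" for k using fun_cong[OF \<open>\<phi> x = \<phi> y\<close>, of k] zz_nz[of p] by (simp add: \<phi>_def)
    thus "x = y" by auto
  qed
  have img: "\<phi> ` ?B = ?B" by (rule endo_inj_surj[OF Bt_finite maps inj])
  define N where "N = e i + (p - 1) * e j"
  have mvphi: "mv n e (\<phi> x) = mv n e x * zz p ^ N" for x
  proof -
    have "mv n e (\<phi> x) = (\<Prod>k<n. x k ^ e k * zz p ^ (a k * e k))"
      by (simp add: mv_def \<phi>_def power_mult_distrib power_mult)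
    also have "\<dots> = mv n e x * zz p ^ (\<Sum>k<n. a k * e k)"
      by (simp only: mv_def prod.distrib power_sum)
    also have "(\<Sum>k<n. a k * e k) = (\<Sum>k<n. (if k = i then e i else if k = j then (p - 1) * e j else 0))"
      by (intro sum.cong) (auto simp: a_def)
    also have "\<dots> = N" unfolding N_def by (rule sum_two_delta[OF ij])
    finally show ?thesis .
  qed
  define S where "S = (\<Sum>x\<in>?B. mv n e x)"
  have "S = (\<Sum>x\<in>\<phi> ` ?B. mv n e x)" by (simp add: S_def img)
  also have "\<dots> = (\<Sum>x\<in>?B. mv n e (\<phi> x))" by (rule sum.reindex[OF inj, unfolded comp_def])
  also have "\<dots> = S * zz p ^ N" by (simp add: mvphi S_def sum_distrib_right)
  finally have SS: "S = S * zz p ^ N" .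
  have "\<not> p dvd N"
  proof
    assume "p dvd N"
    hence "N mod p = 0" by simp
    have "(N + e j) mod p = (N mod p + e j) mod p" by (simp add: mod_add_left_eq)
    also have "\<dots> = e j mod p" using \<open>N mod p = 0\<close> by simp
    finally have "(N + e j) mod p = e j mod p" .
    moreover have "N + e j = e i + p * e j"
    proof -
      obtain q where q: "p = Suc q" using p by (cases p) auto
      show ?thesis unfolding N_def q by simp
    qed
    ultimately have "e i mod p = e j mod p" by simp
    with ne show False by simp
  qed
  hence "zz p ^ N \<noteq> 1" using zz_pow_eq_1[OF p] by blast
  moreover have "S * (zz p ^ N - 1) = 0" using SS by (simp add: algebra_simps)
  ultimately have "S = 0" by simp
  thus ?thesis by (simp add: S_def)
qed

lemma key_ineq:
  fixes s p :: nat assumes "1 \<le> s" "s < p" shows "p - 1 \<le> s * (p - s)"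
proof -
  obtain s' where s': "s = Suc s'" using assms(1) by (cases s) auto
  have "s' * 1 \<le> s' * (p - s)" using assms by (intro mult_le_mono2) auto
  hence "s' \<le> s' * (p - s)" by simp
  moreover have "s * (p - s) = (p - s) + s' * (p - s)" using s' by simp
  ultimately show ?thesis using assms s' by linarith
qed

lemma comb:
  fixes u v :: "nat \<Rightarrow> nat" and n p :: nat
  assumes p: "p \<ge> 2" and n: "n \<ge> 1" and uD: "\<forall>k<n. u k \<le> p - 1" and vm: "v \<in> monoms n"
    and um: "u \<in> monoms n" and neq: "v \<noteq> u" and dle: "mdeg n v \<le> mdeg n u"
    and small: "mdeg n u * p < n * (p - 1)"
  shows "\<exists>i<n. \<exists>j<n. (v i + (p-1)*u i) mod p \<noteq> (v j + (p-1)*u j) mod p"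
proof (rule ccontr)
  assume H: "\<not> ?thesis"
  define c where "c = (v 0 + (p-1)*u 0) mod p"
  have H': "\<forall>i<n. \<forall>j<n. (v i + (p-1)*u i) mod p = (v j + (p-1)*u j) mod p" using H by blast
  have ce: "(v k + (p-1)*u k) mod p = c" if "k<n" for k
  proof -
    have "0 < n" using n by simp
    from H'[rule_format, OF that this] show ?thesis unfolding c_def .
  qed
  have vmod: "v k mod p = (c + u k) mod p" if "k < n" for k
  proof -
    obtain q where q: "p = Suc q" using p by (cases p) auto
    have "v k + p * u k = (v k + (p-1)*u k) + u k" unfolding q by simp
    have "v k mod p = (v k + p * u k) mod p" by simp
    also have "\<dots> = ((v k + (p-1)*u k) + u k) mod p" using \<open>v k + p * u k = _\<close> by (simp add: add.assoc)
    also have "\<dots> = ((v k + (p-1)*u k) mod p + u k) mod p" by (simp add: mod_add_left_eq)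
    also have "\<dots> = (c + u k) mod p" using ce[OF that] by simp
    finally show ?thesis .
  qed
  have cp: "c < p" using p by (simp add: c_def)
  have ulp: "u k < p" if "k<n" for k
  proof -
    have "u k \<le> p - 1" using uD that by blast
    thus ?thesis using p by linarith
  qed
  show False
  proof (cases "c = 0")
    case True
    have le: "u k \<le> v k" if "k < n" for k
    proof -
      have "v k mod p = u k" using vmod[OF that] True ulp[OF that] by simp
      moreover have "v k mod p \<le> v k" by (rule mod_less_eq_dividend)
      ultimately show ?thesis by simp
    qed
    obtain k where k: "v k \<noteq> u k" using neq by auto
    have "k < n"
    proof (rule ccontr)
      assume "\<not> k < n"
      hence "v k = 0" "u k = 0" using vm um by (auto simp: monoms_def)
      with k show False by simp
    qed
    have "mdeg n u < mdeg n v" unfolding mdeg_def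
      by (rule sum_strict_mono_ex1) (use le \<open>k < n\<close> k in \<open>auto intro!: bexI[of _ k] simp: le_neq_implies_less\<close>)
    with dle show False by simp
  next
    case False
    define s where "s = c"
    define w where "w k = v k mod p" for k
    define d where "d k = (if u k + s \<ge> p then 1 else (0::nat))" for k
    have wd: "w k + p * d k = u k + s" if "k<n" for k
    proof (cases "u k + s \<ge> p")
      case True
      have "w k = (u k + s) mod p" using vmod[OF that] by (simp add: w_def s_def add.commute)
      also have "\<dots> = ((u k + s - p) + p) mod p" using True by simp
      also have "\<dots> = (u k + s - p) mod p" by (rule mod_add_self2)
      also have "\<dots> = u k + s - p" using ulp[OF that] cp s_def by simp
      finally show ?thesis using True by (simp add: d_def)
    next
      case F: False
      have "w k = (u k + s) mod p" using vmod[OF that] by (simp add: w_def s_def add.commute)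
      also have "\<dots> = u k + s" using F by simp
      finally show ?thesis using F by (simp add: d_def)
    qed
    have du: "(p - s) * d k \<le> u k" for k by (simp add: d_def, linarith)
    have wv: "w k \<le> v k" for k by (simp add: w_def)
    have "(\<Sum>k<n. w k + p * d k) = (\<Sum>k<n. u k + s)" by (rule sum.cong) (auto simp: wd)
    hence sum1: "(\<Sum>k<n. w k) + p * (\<Sum>k<n. d k) = mdeg n u + n * s"
      by (simp add: sum.distrib sum_distrib_left mdeg_def)
    have "(p - s) * (\<Sum>k<n. d k) = (\<Sum>k<n. (p - s) * d k)" by (simp add: sum_distrib_left)
    also have "\<dots> \<le> mdeg n u" unfolding mdeg_def by (rule sum_mono) (rule du)
    finally have sum2: "(p - s) * (\<Sum>k<n. d k) \<le> mdeg n u" .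
    have "(\<Sum>k<n. w k) \<le> mdeg n v" unfolding mdeg_def by (rule sum_mono) (rule wv)
    hence sum3: "(\<Sum>k<n. w k) \<le> mdeg n u" using dle by simp
    define D where "D = (\<Sum>k<n. d k)"
    have nsD: "n * s \<le> p * D" using sum1 sum3 unfolding D_def by linarith
    have "(p - s) * (n * s) \<le> (p - s) * (p * D)" by (rule mult_le_mono2[OF nsD])
    also have "\<dots> = p * ((p - s) * D)" by simp
    also have "\<dots> \<le> p * mdeg n u" using sum2 unfolding D_def by simp
    finally have A: "(p - s) * (n * s) \<le> p * mdeg n u" .
    have "p - 1 \<le> s * (p - s)" using key_ineq[of s p] False cp s_def by simp
    hence "n * (p - 1) \<le> n * (s * (p - s))" by (rule mult_le_mono2)
    also have "\<dots> = (p - s) * (n * s)" by simp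
    finally have "n * (p - 1) \<le> p * mdeg n u" using A by linarith
    with small show False by (simp add: mult.commute)
  qed
qed

theorem mainTheorem9:
  fixes n p t :: nat
    and ord :: "(nat \<Rightarrow> nat) \<Rightarrow> (nat \<Rightarrow> nat) \<Rightarrow> bool"
  assumes "n \<ge> 1" and "prime p" and "p dvd n"
    and "term_order n ord" and "degree_compatible n ord"
    and "t \<le> p - 1"
  shows "{u \<in> Dset n p. real (mdeg n u) < real n * (real p - 1) / real p} \<subseteq> Sm n ord (Bt n p t)"
proof
  fix u assume uin: "u \<in> {u \<in> Dset n p. real (mdeg n u) < real n * (real p - 1) / real p}"
  have p2: "p \<ge> 2" using assms(2) by (simp add: prime_ge_2_nat)
  have p0: "p > 0" using p2 by simp
  have tp: "t < p" using assms(6) p2 by simp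
  have uD: "\<forall>k<n. u k \<le> p - 1" and um: "u \<in> monoms n" using uin by (auto simp: Dset_def)
  have "real (mdeg n u) * real p < real n * (real p - 1)"
    using uin p0 by (simp add: pos_less_divide_eq)
  hence "real (mdeg n u * p) < real (n * (p - 1))" using p0 by (simp add: of_nat_diff)
  hence small: "mdeg n u * p < n * (p - 1)" by (simp only: of_nat_less_iff)
  let ?B = "Bt n p t"
  have Bfin: "finite ?B" by (rule Bt_finite)
  have Bne: "?B \<noteq> {}" using Bt_nonempty[OF assms(1) tp] .
  show "u \<in> Sm n ord ?B"
    unfolding Sm_def
  proof (intro CollectI conjI um notI)
    assume "\<exists>f. is_poly n f \<and> (\<exists>v. f v \<noteq> 0) \<and> (\<forall>x\<in>?B. peval n f x = 0) \<and> is_leading_mono ord f u"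
    then obtain f where fp: "is_poly n f" and fvan: "\<forall>x\<in>?B. peval n f x = 0"
      and lead: "is_leading_mono ord f u" by blast
    define supp where "supp = {v. f v \<noteq> 0}"
    have fin: "finite supp" and sub: "supp \<subseteq> monoms n" using fp by (auto simp: is_poly_def supp_def)
    have fu: "f u \<noteq> 0" and lt: "\<And>v. f v \<noteq> 0 \<Longrightarrow> v = u \<or> ord v u"
      using lead by (auto simp: is_leading_mono_def)
    have usupp: "u \<in> supp" using fu by (simp add: supp_def)
    have TO: "\<forall>u\<in>monoms n. \<not> ord u u"
      "\<forall>u\<in>monoms n. \<forall>v\<in>monoms n. \<forall>w\<in>monoms n. ord u v \<longrightarrow> ord v w \<longrightarrow> ord u w"
      using assms(4) unfolding term_order_def by blast+
    have DC: "\<forall>u\<in>monoms n. \<forall>v\<in>monoms n. mdeg n u < mdeg n v \<longrightarrow> ord u v"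
      using assms(5) unfolding degree_compatible_def by blast
    have dle: "mdeg n v \<le> mdeg n u" if "v \<in> supp" for v
    proof (rule ccontr)
      assume "\<not> mdeg n v \<le> mdeg n u"
      hence lt1: "mdeg n u < mdeg n v" by simp
      have vm: "v \<in> monoms n" using that sub by blast
      have "ord u v" using DC um vm lt1 by blast
      moreover have "v \<noteq> u" using lt1 by auto
      hence "ord v u" using lt that by (auto simp: supp_def)
      ultimately have "ord u u" using TO(2) um vm by blast
      thus False using TO(1) um by blast
    qed
    define uu where "uu = (\<lambda>k. (p - 1) * u k)"
    define e where "e v = (\<lambda>k. v k + uu k)" for v :: "nat \<Rightarrow> nat"
    have zero_terms: "(\<Sum>x\<in>?B. mv n (e v) x) = 0" if vs: "v \<in> supp" and vne: "v \<noteq> u" for v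
    proof -
      have vm: "v \<in> monoms n" using vs sub by blast
      obtain i j where ij: "i < n" "j < n" "(v i + (p-1)*u i) mod p \<noteq> (v j + (p-1)*u j) mod p"
        using comb[OF p2 assms(1) uD vm um vne dle[OF vs] small] by blast
      hence "i \<noteq> j" by auto
      show ?thesis
        by (rule char_sum_zero[OF p0 ij(1,2) \<open>i \<noteq> j\<close>]) (use ij(3) in \<open>simp add: e_def uu_def\<close>)
    qed
    have uterm: "mv n (e u) x = 1" if "x \<in> ?B" for x
    proof -
      have "x k ^ e u k = 1" if "k < n" for k
      proof -
        obtain m where "x k = omega p m" using \<open>x \<in> ?B\<close> \<open>k < n\<close> by (auto simp: Bt_def Bset_def)
        hence "x k ^ p = 1" using zz_pow_p[OF p0]
          by (simp add: omega_zz power_mult[symmetric] mult.commute[of m p] power_mult)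
        moreover have "e u k = p * u k" using p0 by (cases p) (auto simp: e_def uu_def)
        ultimately show ?thesis by (simp add: power_mult)
      qed
      thus ?thesis by (simp add: mv_def)
    qed
    have peval_eq: "peval n f x = (\<Sum>v\<in>supp. f v * mv n v x)" for x
      by (simp add: peval_def supp_def mv_def)
    have "(0::complex) = (\<Sum>x\<in>?B. peval n f x * mv n uu x)" using fvan by simp
    also have "\<dots> = (\<Sum>x\<in>?B. \<Sum>v\<in>supp. f v * mv n (e v) x)"
    proof (rule sum.cong[OF refl])
      fix x
      have "peval n f x * mv n uu x = (\<Sum>v\<in>supp. f v * mv n v x * mv n uu x)"
        by (simp add: peval_eq sum_distrib_right)
      also have "\<dots> = (\<Sum>v\<in>supp. f v * mv n (e v) x)"
        by (simp add: mult.assoc mv_mult e_def)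
      finally show "peval n f x * mv n uu x = (\<Sum>v\<in>supp. f v * mv n (e v) x)" .
    qed
    also have "\<dots> = (\<Sum>v\<in>supp. \<Sum>x\<in>?B. f v * mv n (e v) x)" by (rule sum.swap)
    also have "\<dots> = (\<Sum>v\<in>supp. f v * (\<Sum>x\<in>?B. mv n (e v) x))" by (simp add: sum_distrib_left)
    also have "\<dots> = f u * (\<Sum>x\<in>?B. mv n (e u) x) + (\<Sum>v\<in>supp - {u}. f v * (\<Sum>x\<in>?B. mv n (e v) x))"
      using fin usupp by (simp add: sum.remove)
    also have "(\<Sum>v\<in>supp - {u}. f v * (\<Sum>x\<in>?B. mv n (e v) x)) = 0"
      by (rule sum.neutral) (auto simp: zero_terms)
    also have "(\<Sum>x\<in>?B. mv n (e u) x) = (\<Sum>x\<in>?B. 1)" by (rule sum.cong) (auto simp: uterm)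
    finally have "0 = f u * of_nat (card ?B)" by simp
    moreover have "card ?B \<noteq> 0" using Bfin Bne by simp
    ultimately show False using fu by simp
  qed
qed

end
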